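(* Let $\varepsilon\in\{-1,1\}$, let $M(\phi,\xi,\eta,g_M)$ be a Lorentzian almost (para)contact manifold of dimension $2m+1$, let $(N,g_N)$ be a semi-Riemannian manifold of dimension $n$, and let $F:M\to N$ be an anti-invariant semi-Riemannian submersion such that $\phi(\ker F_* )=\{0\}$. Then $\xi$ is vertical, $2m=n$ and $\ker F_*=\mathrm{Span}\{\xi\}$. Moreover, $N$ is a Riemannian manifold.
   Context: A Lorentzian almost contact ($\varepsilon=-1$), resp. almost paracontact ($\varepsilon=1$), manifold is a $(2m+1)$-dimensional manifold $M$ with Lorentzian metric $g_M$, $(1,1)$-tensor $\phi$, vector field $\xi$ and $1$-form $\eta$ with $\phi^2X=\varepsilon X+\eta(X)\xi$, $g_M(\phi X,\phi Y)=g_M(X,Y)+\eta(X)\eta(Y)$, $\eta(X)=\varepsilon g_M(X,\xi)$, $\eta(\xi)=-\varepsilon$. A semi-Riemannian submersion $F:M\to N$ is a submersion with nondegenerate fibres such that $F_*$ is an isometry from $(\ker F_* )^\perp$ onto $TN$; it is anti-invariant if $\phi(\ker F_* )\subseteq(\ker F_* )^\perp$. $\xi$ vertical means $\xi$ takes values in $\ker F_*$. A Riemannian manifold has positive definite metric. *)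

theory Defs
  imports "HOL-Analysis.Analysis"
begin

text \<open>Tangent spaces of M are modelled by a Euclidean space 'a (of dimension 2m+1),
tangent spaces of N by a Euclidean space 'b (of dimension n).\<close>

definition symmetric_form :: "('a \<Rightarrow> 'a \<Rightarrow> real) \<Rightarrow> bool" where
  "symmetric_form g \<longleftrightarrow> (\<forall>u v. g u v = g v u)"

definition nondegenerate_on :: "('a::real_vector \<Rightarrow> 'a \<Rightarrow> real) \<Rightarrow> 'a set \<Rightarrow> bool" where
  "nondegenerate_on g S \<longleftrightarrow> (\<forall>u\<in>S. (\<forall>v\<in>S. g u v = 0) \<longrightarrow> u = 0)"

definition neg_index :: "('a::euclidean_space \<Rightarrow> 'a \<Rightarrow> real) \<Rightarrow> nat" where
  "neg_index g = Max {dim S | S. subspace S \<and> (\<forall>v\<in>S. v \<noteq> 0 \<longrightarrow> g v v < 0)}"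

definition semi_riem_form :: "('a::euclidean_space \<Rightarrow> 'a \<Rightarrow> real) \<Rightarrow> bool" where
  "semi_riem_form g \<longleftrightarrow> bilinear g \<and> symmetric_form g \<and> nondegenerate_on g UNIV"

definition riem_form :: "('a::euclidean_space \<Rightarrow> 'a \<Rightarrow> real) \<Rightarrow> bool" where
  "riem_form g \<longleftrightarrow> semi_riem_form g \<and> (\<forall>v. v \<noteq> 0 \<longrightarrow> g v v > 0)"

definition lorentz_form :: "('a::euclidean_space \<Rightarrow> 'a \<Rightarrow> real) \<Rightarrow> bool" where
  "lorentz_form g \<longleftrightarrow> semi_riem_form g \<and> neg_index g = 1"

text \<open>Semi-Riemannian manifold (O'Neill): metric of constant index at every point.\<close>
definition semi_riem_metric :: "'q set \<Rightarrow> ('q \<Rightarrow> 'b::euclidean_space \<Rightarrow> 'b \<Rightarrow> real) \<Rightarrow> bool" where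
  "semi_riem_metric N g \<longleftrightarrow> (\<forall>q\<in>N. semi_riem_form (g q)) \<and> (\<exists>\<nu>. \<forall>q\<in>N. neg_index (g q) = \<nu>)"

definition riem_metric :: "'q set \<Rightarrow> ('q \<Rightarrow> 'b::euclidean_space \<Rightarrow> 'b \<Rightarrow> real) \<Rightarrow> bool" where
  "riem_metric N g \<longleftrightarrow> (\<forall>q\<in>N. riem_form (g q))"

text \<open>Lorentzian almost contact (eps = -1) / paracontact (eps = 1) structure.\<close>
definition lorentz_apc :: "real \<Rightarrow> 'p set \<Rightarrow> ('p \<Rightarrow> 'a::euclidean_space \<Rightarrow> 'a)
    \<Rightarrow> ('p \<Rightarrow> 'a) \<Rightarrow> ('p \<Rightarrow> 'a \<Rightarrow> real) \<Rightarrow> ('p \<Rightarrow> 'a \<Rightarrow> 'a \<Rightarrow> real) \<Rightarrow> bool" where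
  "lorentz_apc eps M phi xi eta g \<longleftrightarrow>
     (\<forall>p\<in>M. lorentz_form (g p) \<and> linear (phi p) \<and> linear (eta p)
        \<and> (\<forall>X. phi p (phi p X) = eps *\<^sub>R X + eta p X *\<^sub>R xi p)
        \<and> (\<forall>X Y. g p (phi p X) (phi p Y) = g p X Y + eta p X * eta p Y)
        \<and> (\<forall>X. eta p X = eps * g p X (xi p))
        \<and> eta p (xi p) = - eps)"

definition vert :: "('p \<Rightarrow> 'a::real_vector \<Rightarrow> 'b::real_vector) \<Rightarrow> 'p \<Rightarrow> 'a set" where
  "vert dF p = {v. dF p v = 0}"

definition orth_compl :: "('a \<Rightarrow> 'a \<Rightarrow> real) \<Rightarrow> 'a set \<Rightarrow> 'a set" where
  "orth_compl g V = {u. \<forall>v\<in>V. g u v = 0}"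

text \<open>Semi-Riemannian submersion F with differential dF (dF p : T_pM \<rightarrow> T_{F p}N).\<close>
definition semi_riem_submersion :: "'p set \<Rightarrow> ('p \<Rightarrow> 'a::euclidean_space \<Rightarrow> 'a \<Rightarrow> real)
    \<Rightarrow> 'q set \<Rightarrow> ('q \<Rightarrow> 'b::euclidean_space \<Rightarrow> 'b \<Rightarrow> real)
    \<Rightarrow> ('p \<Rightarrow> 'q) \<Rightarrow> ('p \<Rightarrow> 'a \<Rightarrow> 'b) \<Rightarrow> bool" where
  "semi_riem_submersion M gM N gN F dF \<longleftrightarrow> DIM('b) < DIM('a) \<and>
     (\<forall>p\<in>M. F p \<in> N \<and> linear (dF p) \<and> range (dF p) = UNIV
        \<and> nondegenerate_on (gM p) (vert dF p)
        \<and> dF p ` orth_compl (gM p) (vert dF p) = UNIV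
        \<and> (\<forall>u\<in>orth_compl (gM p) (vert dF p). \<forall>v\<in>orth_compl (gM p) (vert dF p).
              gN (F p) (dF p u) (dF p v) = gM p u v))"

definition anti_invariant :: "'p set \<Rightarrow> ('p \<Rightarrow> 'a::real_vector \<Rightarrow> 'a) \<Rightarrow> ('p \<Rightarrow> 'a \<Rightarrow> 'a \<Rightarrow> real)
    \<Rightarrow> ('p \<Rightarrow> 'a \<Rightarrow> 'b::real_vector) \<Rightarrow> bool" where
  "anti_invariant M phi gM dF \<longleftrightarrow>
     (\<forall>p\<in>M. phi p ` vert dF p \<subseteq> orth_compl (gM p) (vert dF p))"

end

theory Submission
  imports Defs
begin

lemma bil_simps:
  assumes "bilinear g"
  shows "g (x + y) z = g x z + g y z" "g x (y + z) = g x y + g x z"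
    "g (c *\<^sub>R x) y = c * g x y" "g x (c *\<^sub>R y) = c * g x y"
    "g 0 x = 0" "g x 0 = 0"
  using assms by (simp_all add: bilinear_ladd bilinear_radd bilinear_lmul bilinear_rmul
      bilinear_lzero bilinear_rzero)

lemma null_perturb:
  fixes g :: "'a::real_vector \<Rightarrow> 'a \<Rightarrow> real"
  assumes b: "bilinear g" and s: "symmetric_form g" and v: "g v v = 0"
    and w: "g v w \<noteq> 0" and wpos: "g w w \<ge> 0"
  shows "\<exists>t. g (v + t *\<^sub>R w) (v + t *\<^sub>R w) < 0"
proof -
  define c where "c = g v w"
  define d where "d = g w w"
  define t where "t = - c / (d + 1)"
  have sym: "g w v = c" using s c_def by (simp add: symmetric_form_def)
  have e: "g (v + t *\<^sub>R w) (v + t *\<^sub>R w) = 2 * t * c + t * t * d"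
    using v sym by (simp add: bil_simps[OF b] c_def d_def algebra_simps)
  have dp: "d + 1 > 0" using wpos d_def by simp
  have tt: "t * (d + 1) = - c" using dp unfolding t_def by simp
  have "(2 * t * c + t * t * d) * ((d + 1) * (d + 1)) = c * c * (- d - 2)"
  proof -
    have "(2 * t * c + t * t * d) * ((d + 1) * (d + 1))
        = 2 * c * (t * (d + 1)) * (d + 1) + (t * (d + 1)) * (t * (d + 1)) * d"
      by (simp add: algebra_simps)
    also have "... = c * c * (- d - 2)" unfolding tt by (simp add: algebra_simps)
    finally show ?thesis .
  qed
  moreover have "c * c > 0" using w c_def by (simp add: zero_less_mult_iff) linarith
  moreover have "- d - 2 < 0" using wpos d_def by simp
  ultimately have "(2 * t * c + t * t * d) * ((d + 1) * (d + 1)) < 0"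
    by (simp add: mult_pos_neg)
  moreover have "(d + 1) * (d + 1) > 0" using dp by simp
  ultimately have "2 * t * c + t * t * d < 0"
    by (simp add: mult_less_0_iff)
  then show ?thesis using e by (intro exI[of _ t]) simp
qed

lemma neg_index_ge:
  fixes g :: "'a::euclidean_space \<Rightarrow> 'a \<Rightarrow> real"
  assumes "subspace S" "\<forall>v\<in>S. v \<noteq> 0 \<longrightarrow> g v v < 0"
  shows "dim S \<le> neg_index g"
  unfolding neg_index_def
proof (rule Max_ge)
  show "finite {dim S |S. subspace S \<and> (\<forall>v\<in>S. v \<noteq> 0 \<longrightarrow> g v v < 0)}"
    by (rule finite_subset[of _ "{..DIM('a)}"]) (auto simp: dim_subset_UNIV)
  show "dim S \<in> {dim S |S. subspace S \<and> (\<forall>v\<in>S. v \<noteq> 0 \<longrightarrow> g v v < 0)}"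
    using assms by blast
qed

lemma neg_index_zero_psd:
  fixes g :: "'a::euclidean_space \<Rightarrow> 'a \<Rightarrow> real"
  assumes b: "bilinear g" and z: "neg_index g = 0"
  shows "g v v \<ge> 0"
proof (rule ccontr)
  assume "\<not> g v v \<ge> 0"
  then have neg: "g v v < 0" by simp
  then have v0: "v \<noteq> 0" using bil_simps[OF b] by auto
  have "\<forall>u\<in>span {v}. u \<noteq> 0 \<longrightarrow> g u u < 0"
  proof (intro ballI impI)
    fix u assume "u \<in> span {v}" "u \<noteq> 0"
    then obtain k where k: "u = k *\<^sub>R v" by (auto simp: span_singleton)
    with \<open>u \<noteq> 0\<close> have "k \<noteq> 0" by auto
    then have "k * k > 0" by (simp add: zero_less_mult_iff) linarith
    moreover have "g u u = (k * k) * g v v" using k by (simp add: bil_simps[OF b])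
    ultimately show "g u u < 0" using neg by (simp add: mult_pos_neg)
  qed
  then have "dim (span {v}) \<le> neg_index g"
    by (intro neg_index_ge) auto
  then show False using v0 z by simp
qed

lemma psd_riem:
  fixes g :: "'a::euclidean_space \<Rightarrow> 'a \<Rightarrow> real"
  assumes sr: "semi_riem_form g" and psd: "\<forall>v. g v v \<ge> 0"
  shows "riem_form g"
proof -
  have b: "bilinear g" and s: "symmetric_form g" and nd: "nondegenerate_on g UNIV"
    using sr by (auto simp: semi_riem_form_def)
  have "g v v > 0" if v0: "v \<noteq> 0" for v
  proof (rule ccontr)
    assume "\<not> g v v > 0"
    then have vv: "g v v = 0" using psd[rule_format, of v] by simp
    then obtain w where w: "g v w \<noteq> 0" using nd v0 unfolding nondegenerate_on_def by blast
    obtain t where "g (v + t *\<^sub>R w) (v + t *\<^sub>R w) < 0"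
      using null_perturb[OF b s vv w] psd by blast
    then show False using psd by (metis not_le)
  qed
  then show ?thesis using sr by (simp add: riem_form_def)
qed

lemma posdef_index0:
  fixes g :: "'a::euclidean_space \<Rightarrow> 'a \<Rightarrow> real"
  assumes pd: "\<forall>v. v \<noteq> 0 \<longrightarrow> g v v > 0"
  shows "neg_index g = 0"
proof -
  have "{dim S |S. subspace S \<and> (\<forall>v\<in>S. v \<noteq> 0 \<longrightarrow> g v v < 0)} = {0}"
  proof (intro equalityI subsetI)
    fix x assume "x \<in> {dim S |S. subspace S \<and> (\<forall>v\<in>S. v \<noteq> 0 \<longrightarrow> g v v < 0)}"
    then obtain S where S: "x = dim S" "\<forall>v\<in>S. v \<noteq> 0 \<longrightarrow> g v v < 0" by blast
    then have "S \<subseteq> {0}" using pd by force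
    then have "dim S \<le> dim {0::'a}" by (rule dim_subset)
    then show "x \<in> {0}" using S by simp
  next
    fix x assume "x \<in> {0::nat}"
    then show "x \<in> {dim S |S. subspace S \<and> (\<forall>v\<in>S. v \<noteq> 0 \<longrightarrow> g v v < 0)}"
      by (intro CollectI exI[of _ "{0::'a}"]) (auto simp: subspace_0)
  qed
  then show ?thesis unfolding neg_index_def by simp
qed




lemma pointwise:
  fixes eps :: real and m :: nat
    and phi :: "'a::euclidean_space \<Rightarrow> 'a" and xi :: "'a"
    and eta :: "'a \<Rightarrow> real" and g :: "'a \<Rightarrow> 'a \<Rightarrow> real"
    and gn :: "'b::euclidean_space \<Rightarrow> 'b \<Rightarrow> real"
    and f :: "'a \<Rightarrow> 'b"
  assumes eps: "eps * eps = 1"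
    and dima: "DIM('a) = 2 * m + 1"
    and dimab: "DIM('b) < DIM('a)"
    and lf: "lorentz_form g" and lphi: "linear phi" and leta: "linear eta"
    and phi2: "\<forall>X. phi (phi X) = eps *\<^sub>R X + eta X *\<^sub>R xi"
    and etadef: "\<forall>X. eta X = eps * g X xi"
    and etaxi: "eta xi = - eps"
    and linf: "linear f" and surj: "range f = UNIV"
    and hsurj: "f ` orth_compl g {v. f v = 0} = UNIV"
    and iso: "\<forall>u\<in>orth_compl g {v. f v = 0}. \<forall>v\<in>orth_compl g {v. f v = 0}. gn (f u) (f v) = g u v"
    and phiV: "phi ` {v. f v = 0} = {0}"
  shows "f xi = 0 \<and> {v. f v = 0} = span {xi} \<and> 2 * m = DIM('b) \<and> neg_index gn = 0"
proof -
  define V where "V = {v. f v = 0}"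
  have b: "bilinear g" and s: "symmetric_form g" and nd: "nondegenerate_on g UNIV"
    and idx: "neg_index g = 1"
    using lf by (auto simp: lorentz_form_def semi_riem_form_def)
  have sym: "g x y = g y x" for x y using s by (simp add: symmetric_form_def)
  note bs = bil_simps[OF b]
  have gxx: "g xi xi = -1"
  proof -
    have "eps * g xi xi = - eps" using etadef etaxi by simp
    then have "eps * (eps * g xi xi) = eps * (- eps)" by simp
    then show ?thesis using eps by (simp add: mult.assoc[symmetric])
  qed
  have xi0: "xi \<noteq> 0" using gxx bs by auto
  have Vsub: "v = (- (eps * eta v)) *\<^sub>R xi" if "v \<in> V" for v
  proof -
    have "phi v = 0" using phiV that V_def by auto
    then have "phi (phi v) = 0" using lphi by (simp add: linear_0)
    then have "eps *\<^sub>R v + eta v *\<^sub>R xi = 0" using phi2 by simp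
    then have "eps *\<^sub>R (eps *\<^sub>R v + eta v *\<^sub>R xi) = 0" by simp
    then have "v + (eps * eta v) *\<^sub>R xi = 0" using eps by (simp add: scaleR_add_right)
    then show ?thesis by (simp add: eq_neg_iff_add_eq_0 add.commute)
  qed
  have subV: "subspace V"
    unfolding subspace_def V_def using linf by (auto simp: linear_add linear_scale linear_0)
  have "\<exists>v\<in>V. v \<noteq> 0"
  proof (rule ccontr)
    assume "\<not> (\<exists>v\<in>V. v \<noteq> 0)"
    then have "inj f" using linf V_def by (auto simp: linear_injective_0)
    then have "dim (f ` UNIV) = dim (UNIV :: 'a set)"
      using linf by (intro dim_image_eq) (auto simp: inj_on_def)
    then show False using surj dimab by simp
  qed
  then obtain v where v: "v \<in> V" "v \<noteq> 0" by blast
  have fxi: "f xi = 0"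
  proof -
    have "v = (- (eps * eta v)) *\<^sub>R xi" using Vsub v by blast
    moreover have "f v = 0" using v V_def by simp
    ultimately have "(- (eps * eta v)) *\<^sub>R f xi = 0" using linf by (metis linear_scale)
    moreover have "- (eps * eta v) \<noteq> 0" using \<open>v = _\<close> v(2) by (metis scaleR_zero_left)
    ultimately show ?thesis by simp
  qed
  have Veq: "V = span {xi}"
  proof
    show "V \<subseteq> span {xi}"
    proof
      fix u assume "u \<in> V"
      then have "u = (- (eps * eta u)) *\<^sub>R xi" by (rule Vsub)
      then show "u \<in> span {xi}" by (metis span_base span_mul insertI1)
    qed
    show "span {xi} \<subseteq> V" using subV fxi V_def by (intro span_minimal) auto
  qed
  define T where "T = {x. xi \<bullet> x = 0}"
  have dimT: "dim T = 2 * m" using dim_hyperplane[OF xi0] dima T_def by simp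
  have subT: "subspace T" using subspace_hyperplane T_def by simp
  have injT: "inj_on f (span T)"
  proof -
    have "x = y" if "x \<in> T" "y \<in> T" "f x = f y" for x y
    proof -
      have "f (x - y) = 0" using that linf by (simp add: linear_diff)
      then have "x - y \<in> span {xi}" using Veq V_def by auto
      then obtain k where k: "x - y = k *\<^sub>R xi" by (auto simp: span_singleton)
      have "xi \<bullet> (x - y) = 0" using that T_def by (simp add: inner_diff_right)
      then have "k * (xi \<bullet> xi) = 0" using k by simp
      then have "k = 0" using xi0 by simp
      then show ?thesis using k by simp
    qed
    moreover have sT: "span T = T" using subT by simp
    ultimately show ?thesis unfolding sT inj_on_def by blast
  qed
  have imT: "f ` T = UNIV"
  proof (intro set_eqI iffI)
    fix y :: 'b assume "y \<in> UNIV"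
    then obtain x where x: "y = f x" using surj by auto
    define z where "z = x - ((xi \<bullet> x) / (xi \<bullet> xi)) *\<^sub>R xi"
    have "z \<in> T" using xi0 unfolding z_def T_def by (simp add: inner_diff_right)
    moreover have "f z = y" unfolding z_def using x fxi linf by (simp add: linear_diff linear_scale)
    ultimately show "y \<in> f ` T" by blast
  qed auto
  have "dim (f ` T) = dim T" using linf injT by (intro dim_image_eq)
  then have dimb: "2 * m = DIM('b)" using imT dimT by simp
  define H where "H = orth_compl g V"
  have hH: "h \<in> H \<longleftrightarrow> g h xi = 0" for h
  proof
    assume "h \<in> H" then show "g h xi = 0" using fxi unfolding V_def H_def orth_compl_def by auto
  next
    assume h: "g h xi = 0"
    show "h \<in> H" unfolding H_def orth_compl_def Veq
    proof (intro CollectI ballI)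
      fix u assume "u \<in> span {xi}"
      then obtain k where "u = k *\<^sub>R xi" by (auto simp: span_singleton)
      then show "g h u = 0" using h bs by simp
    qed
  qed
  have claim1: "g h h \<ge> 0" if "h \<in> H" for h
  proof (rule ccontr)
    assume "\<not> g h h \<ge> 0"
    then have neg: "g h h < 0" by simp
    have hxi: "g h xi = 0" "g xi h = 0" using that hH sym by auto
    have "\<forall>u\<in>span {xi, h}. u \<noteq> 0 \<longrightarrow> g u u < 0"
    proof (intro ballI impI)
      fix u assume u: "u \<in> span {xi, h}" "u \<noteq> 0"
      then obtain a where "u - a *\<^sub>R xi \<in> span {h}" by (auto simp: span_breakdown_eq)
      then obtain c where "u - a *\<^sub>R xi = c *\<^sub>R h" by (auto simp: span_singleton)
      then have ue: "u = a *\<^sub>R xi + c *\<^sub>R h" by (simp add: algebra_simps)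
      have "g u u = - (a * a) + c * c * g h h"
        unfolding ue using hxi gxx by (simp add: bs algebra_simps)
      moreover have "a \<noteq> 0 \<or> c \<noteq> 0" using u ue by auto
      moreover have "a * a \<ge> 0" "c * c \<ge> 0" by simp_all
      moreover have "a \<noteq> 0 \<Longrightarrow> a * a > 0" by (simp add: zero_less_mult_iff) linarith
      moreover have "c \<noteq> 0 \<Longrightarrow> c * c * g h h < 0"
      proof -
        assume "c \<noteq> 0"
        then have "c * c > 0" by (simp add: zero_less_mult_iff) linarith
        then show ?thesis using neg by (simp add: mult_pos_neg)
      qed
      moreover have "c * c * g h h \<le> 0" using neg \<open>c * c \<ge> 0\<close> by (simp add: mult_nonneg_nonpos)
      ultimately show "g u u < 0" by linarith
    qed
    then have "dim (span {xi, h}) \<le> neg_index g" by (intro neg_index_ge) auto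
    moreover have "xi \<notin> span {h}"
    proof
      assume "xi \<in> span {h}"
      then obtain k where "xi = k *\<^sub>R h" by (auto simp: span_singleton)
      then have "g xi xi = k * g h xi" by (simp add: bs)
      then show False using gxx hxi by simp
    qed
    moreover have "h \<noteq> 0" using neg bs by auto
    ultimately show False using idx by (simp add: dim_insert)
  qed
  have claim2: "g h h > 0" if hh0: "h \<in> H" "h \<noteq> 0" for h
  proof (rule ccontr)
    assume "\<not> g h h > 0"
    then have hh: "g h h = 0" using claim1[OF hh0(1)] by simp
    obtain w where w: "g h w \<noteq> 0" using nd hh0(2) unfolding nondegenerate_on_def by blast
    define wH where "wH = w + g w xi *\<^sub>R xi"
    have hxi: "g h xi = 0" using hh0 hH by auto
    have "g wH xi = 0" unfolding wH_def using gxx by (simp add: bs)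
    then have wHH: "wH \<in> H" using hH by simp
    have "g h wH = g h w" unfolding wH_def using hxi by (simp add: bs)
    then have hw: "g h wH \<noteq> 0" using w by simp
    obtain t where t: "g (h + t *\<^sub>R wH) (h + t *\<^sub>R wH) < 0"
      using null_perturb[OF b s hh hw claim1[OF wHH]] by blast
    have "g (h + t *\<^sub>R wH) xi = 0" using hxi \<open>g wH xi = 0\<close> by (simp add: bs)
    then have "h + t *\<^sub>R wH \<in> H" using hH by simp
    then show False using claim1 t by (metis not_le)
  qed
  have "\<forall>y. y \<noteq> 0 \<longrightarrow> gn y y > 0"
  proof (intro allI impI)
    fix y :: 'b assume y: "y \<noteq> 0"
    obtain u where u: "u \<in> H" "y = f u" using hsurj H_def V_def by (metis UNIV_I imageE)
    have "u \<noteq> 0" using u y linf by (auto simp: linear_0)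
    then have "g u u > 0" using claim2 u by simp
    moreover have "gn (f u) (f u) = g u u" using iso u H_def V_def by simp
    ultimately show "gn y y > 0" using u by simp
  qed
  then have "neg_index gn = 0" by (rule posdef_index0)
  then show ?thesis using fxi Veq V_def dimb by simp
qed

theorem mainTheorem14:
  fixes eps :: real and m :: nat
    and M :: "'p set" and N :: "'q set"
    and phi :: "'p \<Rightarrow> 'a::euclidean_space \<Rightarrow> 'a" and xi :: "'p \<Rightarrow> 'a"
    and eta :: "'p \<Rightarrow> 'a \<Rightarrow> real" and gM :: "'p \<Rightarrow> 'a \<Rightarrow> 'a \<Rightarrow> real"
    and gN :: "'q \<Rightarrow> 'b::euclidean_space \<Rightarrow> 'b \<Rightarrow> real"
    and F :: "'p \<Rightarrow> 'q" and dF :: "'p \<Rightarrow> 'a \<Rightarrow> 'b"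
  assumes "eps \<in> {-1, 1}"
    and "M \<noteq> {}"
    and "DIM('a) = 2 * m + 1"
    and "lorentz_apc eps M phi xi eta gM"
    and "semi_riem_metric N gN"
    and "semi_riem_submersion M gM N gN F dF"
    and "anti_invariant M phi gM dF"
    and "\<forall>p\<in>M. phi p ` vert dF p = {0}"
  shows "(\<forall>p\<in>M. xi p \<in> vert dF p) \<and> 2 * m = DIM('b)
         \<and> (\<forall>p\<in>M. vert dF p = span {xi p}) \<and> riem_metric N gN"
proof -
  have eps: "eps * eps = 1" using assms(1) by auto
  have dimab: "DIM('b) < DIM('a)" using assms(6) by (simp add: semi_riem_submersion_def)
  have pt: "dF p (xi p) = 0 \<and> {v. dF p v = 0} = span {xi p} \<and> 2 * m = DIM('b)
             \<and> neg_index (gN (F p)) = 0" if p: "p \<in> M" for p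
  proof (rule pointwise[where phi = "phi p" and eta = "eta p" and g = "gM p"])
    show "eps * eps = 1" by (rule eps)
    show "DIM('a) = 2 * m + 1" by (rule assms(3))
    show "DIM('b) < DIM('a)" by (rule dimab)
    show "lorentz_form (gM p)" "linear (phi p)" "linear (eta p)"
      "\<forall>X. phi p (phi p X) = eps *\<^sub>R X + eta p X *\<^sub>R xi p"
      "\<forall>X. eta p X = eps * gM p X (xi p)" "eta p (xi p) = - eps"
      using assms(4) p unfolding lorentz_apc_def by auto
    show "linear (dF p)" "range (dF p) = UNIV"
      "dF p ` orth_compl (gM p) {v. dF p v = 0} = UNIV"
      "\<forall>u\<in>orth_compl (gM p) {v. dF p v = 0}. \<forall>v\<in>orth_compl (gM p) {v. dF p v = 0}.
         gN (F p) (dF p u) (dF p v) = gM p u v"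
      using assms(6) p unfolding semi_riem_submersion_def vert_def by auto
    show "phi p ` {v. dF p v = 0} = {0}" using assms(8) p unfolding vert_def by auto
  qed
  obtain p0 where p0: "p0 \<in> M" using assms(2) by blast
  have Fp0: "F p0 \<in> N" using assms(6) p0 by (simp add: semi_riem_submersion_def)
  obtain nu where nu: "\<forall>q\<in>N. neg_index (gN q) = nu" and srf: "\<forall>q\<in>N. semi_riem_form (gN q)"
    using assms(5) unfolding semi_riem_metric_def by blast
  have nu0: "nu = 0" using nu Fp0 pt[OF p0] by auto
  have "riem_metric N gN"
    unfolding riem_metric_def
  proof
    fix q assume q: "q \<in> N"
    have b: "bilinear (gN q)" using srf q by (simp add: semi_riem_form_def)
    have "\<forall>v. gN q v v \<ge> 0" using neg_index_zero_psd[OF b] nu nu0 q by auto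
    then show "riem_form (gN q)" using psd_riem srf q by blast
  qed
  then show ?thesis using pt p0 unfolding vert_def by auto
qed

end
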